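(* Let $F:(\mathbb R^n\times\mathbb R,0)\to(\mathbb R^m,0)$, $n\ge m\ge 2$, $F=(f_1,\dots,f_m)$, be an analytic germ satisfying: there exists $0<\theta<1$ such that for every $x_0\in F_0^{-1}(0)\cap\operatorname{Sing}F_0\setminus\{0\}$ there is $c(x_0)>0$ with $\|F(x,t)\|^\theta\le c(x_0)\nu_{F_t}(x)$ for all $(x,t)\notin\operatorname{Sing}\widetilde F$ close enough to $(x_0,0)$. Let $L\in\mathbb N$ with $\theta<\frac{L-1}{L}$, let $X=\{(x,t,s)\in\mathbb R^n\times\mathbb R\times\mathbb R^m: f_i(x,t)=s_i^L,\ i=1,\dots,m\}$ and $\pi:X\to\mathbb R$, $\pi(x,t,s)=t$. Let $x_0\in F_0^{-1}(0)\cap\operatorname{Sing}F_0\setminus\{0\}$ and let $(x_k,t_k,s_k)\in X$ be a sequence with $(x_k,t_k)\notin\operatorname{Sing}\widetilde F$, $(x_k,t_k,s_k)\to(x_0,0,0)$, such that the $n$-dimensional tangent spaces $T_{(x_k,t_k,s_k)}(\pi^{-1}(t_k)\cap X)$ converge in the Grassmannian to a space $T$. Then $T=A\times\{0\}\times\mathbb R^m\subset\mathbb R^n\times\mathbb R\times\mathbb R^m$ for some linear subspace $A\subset\mathbb R^n$ of dimension $n-m$.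
   Context: $F_t=F(\cdot,t)$, $F_0=F(\cdot,0)$, $\widetilde F(x,t)=(F(x,t),t)$. $\nu_{F_t}(x):=\min_{\|a\|=1}\bigl\|\sum_{i=1}^m a_i\operatorname{grad}_x f_i(x,t)\bigr\|$ with $\operatorname{grad}_x f_i=(\partial f_i/\partial x_1,\dots,\partial f_i/\partial x_n)$. $\operatorname{Sing}$ of a map denotes the set where its Jacobian has rank less than the target dimension; note $(x,t)\notin\operatorname{Sing}\widetilde F$ iff $\nu_{F_t}(x)>0$, so near such points $\pi^{-1}(t)\cap X$ is a smooth $n$-dimensional manifold. *)

theory Defs
  imports "HOL-Analysis.Analysis"
begin

text \<open>Real analyticity at a point of a real-valued function on a Euclidean space:
  locally the sum of a (unconditionally, hence absolutely) convergent power series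
  in the coordinates with respect to the standard basis.\<close>
definition real_analytic_at :: "('a::euclidean_space \<Rightarrow> real) \<Rightarrow> 'a \<Rightarrow> bool" where
  "real_analytic_at f p \<longleftrightarrow>
     (\<exists>r>0. \<exists>c :: ('a \<Rightarrow> nat) \<Rightarrow> real. \<forall>y\<in>ball p r.
        ((\<lambda>\<alpha>. c \<alpha> * (\<Prod>b\<in>Basis. ((y - p) \<bullet> b) ^ \<alpha> b)) has_sum f y)
          {\<alpha>. \<forall>b. b \<notin> Basis \<longrightarrow> \<alpha> b = 0})"

definition analytic_map_on :: "'a set \<Rightarrow> ('a::euclidean_space \<Rightarrow> real^'m) \<Rightarrow> bool" where
  "analytic_map_on U F \<longleftrightarrow> (\<forall>p\<in>U. \<forall>i. real_analytic_at (\<lambda>y. F y $ i) p)"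

definition Sing :: "('a::real_normed_vector \<Rightarrow> 'b::real_normed_vector) \<Rightarrow> 'a set" where
  "Sing G = {p. \<not> surj (frechet_derivative G (at p))}"

definition grad_x :: "((real^'n) \<times> real \<Rightarrow> real^'m) \<Rightarrow> 'm \<Rightarrow> real^'n \<Rightarrow> real \<Rightarrow> real^'n" where
  "grad_x F i x t = (\<chi> j. frechet_derivative (\<lambda>y. F (y, t)) (at x) (axis j 1) $ i)"

definition nu :: "((real^'n) \<times> real \<Rightarrow> real^'m) \<Rightarrow> real \<Rightarrow> real^'n \<Rightarrow> real" where
  "nu F t x = Inf {norm (\<Sum>i\<in>UNIV. (a $ i) *\<^sub>R grad_x F i x t) | a :: real^'m. norm a = 1}"

definition Ftilde :: "((real^'n) \<times> real \<Rightarrow> real^'m) \<Rightarrow> (real^'n) \<times> real \<Rightarrow> (real^'m) \<times> real" where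
  "Ftilde F = (\<lambda>(x, t). (F (x, t), t))"

text \<open>Tangent space of a set S at p (tangent cone: limits of secant directions);
  for a C^1 submanifold this is the usual tangent space.\<close>
definition tangent_space :: "'a::real_normed_vector set \<Rightarrow> 'a \<Rightarrow> 'a set" where
  "tangent_space S p = {v. \<exists>y c. (\<forall>k. y k \<in> S \<and> c k > (0::real)) \<and> y \<longlonglongrightarrow> p
                               \<and> (\<lambda>k. c k *\<^sub>R (y k - p)) \<longlonglongrightarrow> v}"

text \<open>Convergence in the Grassmannian, using the Hausdorff distance of unit balls.\<close>
definition grassmann_tendsto :: "(nat \<Rightarrow> 'a::euclidean_space set) \<Rightarrow> 'a set \<Rightarrow> bool" where
  "grassmann_tendsto V T \<longleftrightarrow>
     (\<forall>e>0. \<forall>\<^sub>F k in sequentially.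
        (\<forall>v\<in>V k. norm v \<le> 1 \<longrightarrow> (\<exists>w\<in>T. norm w \<le> 1 \<and> dist v w < e)) \<and>
        (\<forall>w\<in>T. norm w \<le> 1 \<longrightarrow> (\<exists>v\<in>V k. norm v \<le> 1 \<and> dist v w < e)))"

end

theory Submission
  imports Defs
begin

lemma deg_ge2:
  fixes \<alpha> :: "'a::euclidean_space \<Rightarrow> nat"
  assumes I: "\<forall>b. b \<notin> Basis \<longrightarrow> \<alpha> b = 0"
    and nJ: "\<alpha> \<notin> insert (\<lambda>_. 0) ((\<lambda>b b'. if b' = b then 1 else 0) ` Basis)"
  shows "2 \<le> (\<Sum>b\<in>Basis. \<alpha> b)"
proof (rule ccontr)
  assume "\<not> ?thesis"
  hence le: "(\<Sum>b\<in>Basis. \<alpha> b) \<le> 1" by simp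
  show False
  proof (cases "\<exists>b0\<in>Basis. \<alpha> b0 \<noteq> 0")
    case False
    hence "\<alpha> = (\<lambda>_. 0)" using I by (metis ext)
    thus False using nJ by simp
  next
    case True
    then obtain b0 where b0: "b0 \<in> Basis" "\<alpha> b0 \<noteq> 0" by blast
    have s: "(\<Sum>b\<in>Basis. \<alpha> b) = \<alpha> b0 + (\<Sum>b\<in>Basis - {b0}. \<alpha> b)"
      using b0 by (simp add: sum.remove)
    hence a1: "\<alpha> b0 = 1" and r0: "(\<Sum>b\<in>Basis - {b0}. \<alpha> b) = 0" using le b0(2) by linarith+
    have "\<forall>b\<in>Basis - {b0}. \<alpha> b = 0" using r0 by (simp add: sum_eq_0_iff)
    have "\<alpha> = (\<lambda>b'. if b' = b0 then 1 else 0)" proof (rule ext)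
      fix b' show "\<alpha> b' = (if b' = b0 then 1 else 0)"
        using I a1 \<open>\<forall>b\<in>Basis - {b0}. \<alpha> b = 0\<close> by (cases "b' \<in> Basis") auto
    qed
    hence "\<alpha> \<in> (\<lambda>b b'. if b' = b then 1 else 0) ` Basis" using b0(1) by blast
    thus False using nJ by blast
  qed
qed

lemma analytic_bound:
  fixes f :: "'a::euclidean_space \<Rightarrow> real"
  assumes "real_analytic_at f p"
  shows "\<exists>c0 L A \<rho>. \<rho> > 0 \<and> linear L \<and>
           (\<forall>y. norm (y - p) \<le> \<rho> \<longrightarrow> \<bar>f y - c0 - L (y - p)\<bar> \<le> A * norm (y - p) ^ 2)"
proof -
  define I where "I = {\<alpha> :: 'a \<Rightarrow> nat. \<forall>b. b \<notin> Basis \<longrightarrow> \<alpha> b = 0}"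
  obtain r c where r: "r > 0" and H: "\<And>y. y \<in> ball p r \<Longrightarrow>
      ((\<lambda>\<alpha>. c \<alpha> * (\<Prod>b\<in>Basis. ((y - p) \<bullet> b) ^ \<alpha> b)) has_sum f y) I"
    using assms unfolding real_analytic_at_def I_def by blast
  define deg where "deg \<alpha> = (\<Sum>b\<in>Basis. \<alpha> b)" for \<alpha> :: "'a \<Rightarrow> nat"
  define \<rho> where "\<rho> = r / (2 * real DIM('a))"
  have \<rho>: "\<rho> > 0" using r by (simp add: \<rho>_def)
  have \<rho>r: "\<rho> < r"
  proof -
    have "real DIM('a) \<ge> 1" by (simp add: Suc_leI)
    hence "1 < 2 * real DIM('a)" by linarith
    thus ?thesis using r by (simp add: \<rho>_def divide_less_eq) 
  qed
  define q where "q = p + \<rho> *\<^sub>R (\<Sum>Basis)"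
  have "norm (\<Sum>b\<in>Basis. (b::'a)) \<le> (\<Sum>b\<in>Basis. norm (b::'a))" by (rule norm_sum)
  also have "\<dots> = real DIM('a)" by simp
  finally have nB: "norm (\<Sum>b\<in>Basis. (b::'a)) \<le> real DIM('a)" .
  have "norm (q - p) = \<rho> * norm (\<Sum>b\<in>Basis. (b::'a))" using \<rho> by (simp add: q_def)
  also have "\<dots> \<le> \<rho> * real DIM('a)" using nB \<rho> by (intro mult_left_mono) auto
  also have "\<dots> = r / 2" unfolding \<rho>_def by simp
  finally have "q \<in> ball p r" using r by (simp add: dist_norm norm_minus_commute)
  from H[OF this] have Hq: "((\<lambda>\<alpha>. c \<alpha> * \<rho> ^ deg \<alpha>) has_sum f q) I"
  proof -
    have "(\<Prod>b\<in>Basis. ((q - p) \<bullet> b) ^ \<alpha> b) = \<rho> ^ deg \<alpha>" for \<alpha>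
      by (simp add: power_sum q_def deg_def)
    thus ?thesis using H[OF \<open>q \<in> ball p r\<close>] by simp
  qed
  hence "(\<lambda>\<alpha>. c \<alpha> * \<rho> ^ deg \<alpha>) summable_on I" by (auto simp: summable_on_def)
  hence "(\<lambda>\<alpha>. norm (c \<alpha> * \<rho> ^ deg \<alpha>)) summable_on I"
    by (rule summable_on_iff_abs_summable_on_real[THEN iffD1])
  hence "(\<lambda>\<alpha>. \<bar>c \<alpha>\<bar> * \<rho> ^ deg \<alpha>) summable_on I"
    using \<rho> by (simp add: abs_mult)
  then obtain A0 where A0: "((\<lambda>\<alpha>. \<bar>c \<alpha>\<bar> * \<rho> ^ deg \<alpha>) has_sum A0) I"
    using has_sum_infsum by blast
  define \<delta> where "\<delta> b = (\<lambda>b'. if b' = b then 1 else (0::nat))" for b :: 'a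
  define J where "J = insert (\<lambda>_. 0) (\<delta> ` Basis)"
  have JI: "J \<subseteq> I" by (auto simp: J_def I_def \<delta>_def)
  have finJ: "finite J" by (simp add: J_def)
  have inj\<delta>: "inj_on \<delta> Basis" by (auto simp: inj_on_def \<delta>_def fun_eq_iff) 
  have n0: "(\<lambda>_. 0) \<notin> \<delta> ` Basis"
  proof
    assume "(\<lambda>_. 0) \<in> \<delta> ` Basis"
    then obtain b where "(\<lambda>_. 0) = \<delta> b" by auto
    from fun_cong[OF this, of b] show False by (simp add: \<delta>_def)
  qed
  define L where "L v = (\<Sum>b\<in>Basis. c (\<delta> b) * (v \<bullet> b))" for v
  have linL: "linear L"
    by (rule linearI) (simp_all add: L_def inner_add_left algebra_simps sum.distrib sum_distrib_left)
  define A where "A = A0 / \<rho>^2"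
  have main: "\<bar>f y - c (\<lambda>_. 0) - L (y - p)\<bar> \<le> A * norm (y - p) ^ 2" if y: "norm (y - p) \<le> \<rho>" for y
  proof -
    define d where "d = norm (y - p)"
    have yb: "y \<in> ball p r" using y \<rho>r by (simp add: dist_norm norm_minus_commute)
    define g where "g \<alpha> = c \<alpha> * (\<Prod>b\<in>Basis. ((y - p) \<bullet> b) ^ \<alpha> b)" for \<alpha>
    have Hy: "(g has_sum f y) I" using H[OF yb] by (simp add: g_def[abs_def])
    have "((\<lambda>\<alpha>. if \<alpha> \<in> J then g \<alpha> else 0) has_sum sum g J) I"
    proof -
      have "(g has_sum sum g J) J" using finJ by simp
      thus ?thesis by (subst has_sum_cong_neutral[where T=J]) (use JI in auto)
    qed
    hence "((\<lambda>\<alpha>. - (if \<alpha> \<in> J then g \<alpha> else 0)) has_sum (- sum g J)) I"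
      by (simp add: has_sum_uminus)
    from has_sum_add[OF Hy this]
    have "((\<lambda>\<alpha>. g \<alpha> + - (if \<alpha> \<in> J then g \<alpha> else 0)) has_sum (f y + - sum g J)) I" .
    hence R: "((\<lambda>\<alpha>. if \<alpha> \<in> J then 0 else g \<alpha>) has_sum (f y - sum g J)) I"
      by (simp add: if_distrib cong: if_cong)
    have sJ: "sum g J = c (\<lambda>_. 0) + L (y - p)"
    proof -
      have "sum g J = g (\<lambda>_. 0) + sum g (\<delta> ` Basis)" using n0 by (simp add: J_def)
      also have "sum g (\<delta> ` Basis) = (\<Sum>b\<in>Basis. g (\<delta> b))" by (rule sum.reindex[OF inj\<delta>, unfolded comp_def])
      also have "\<dots> = L (y - p)" unfolding L_def g_def \<delta>_def
        by (intro sum.cong refl) (simp add: if_distrib[of "\<lambda>n. _ ^ n"] prod.delta cong: if_cong)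
      finally show ?thesis by (simp add: g_def)
    qed
    have bnd: "\<bar>if \<alpha> \<in> J then 0 else g \<alpha>\<bar> \<le> (d / \<rho>)^2 * (\<bar>c \<alpha>\<bar> * \<rho> ^ deg \<alpha>)" if a: "\<alpha> \<in> I" for \<alpha>
    proof (cases "\<alpha> \<in> J")
      case True thus ?thesis using \<rho> by simp
    next
      case False
      have dg: "2 \<le> deg \<alpha>" using deg_ge2[of \<alpha>] a False unfolding I_def J_def \<delta>_def deg_def by blast
      have "\<bar>\<Prod>b\<in>Basis. ((y - p) \<bullet> b) ^ \<alpha> b\<bar> = (\<Prod>b\<in>Basis. \<bar>(y - p) \<bullet> b\<bar> ^ \<alpha> b)"
        by (simp add: abs_prod power_abs)
      also have "\<dots> \<le> (\<Prod>b\<in>Basis. d ^ \<alpha> b)"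
        by (intro prod_mono conjI power_mono) (auto simp: d_def Basis_le_norm)
      also have "\<dots> = d ^ deg \<alpha>" by (simp add: deg_def power_sum)
      also have "\<dots> = \<rho> ^ deg \<alpha> * (d / \<rho>) ^ deg \<alpha>" using \<rho> by (simp add: power_divide)
      also have "\<dots> \<le> \<rho> ^ deg \<alpha> * (d / \<rho>) ^ 2"
        using dg y \<rho> by (intro mult_left_mono power_decreasing) (auto simp: d_def)
      finally have "\<bar>\<Prod>b\<in>Basis. ((y - p) \<bullet> b) ^ \<alpha> b\<bar> \<le> \<rho> ^ deg \<alpha> * (d / \<rho>) ^ 2" .
      hence "\<bar>c \<alpha>\<bar> * \<bar>\<Prod>b\<in>Basis. ((y - p) \<bullet> b) ^ \<alpha> b\<bar> \<le> \<bar>c \<alpha>\<bar> * (\<rho> ^ deg \<alpha> * (d / \<rho>) ^ 2)"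
        by (rule mult_left_mono) simp
      thus ?thesis using False by (simp add: g_def abs_mult algebra_simps)
    qed
    have A0': "((\<lambda>\<alpha>. (d / \<rho>)^2 * (\<bar>c \<alpha>\<bar> * \<rho> ^ deg \<alpha>)) has_sum ((d / \<rho>)^2 * A0)) I"
      by (rule has_sum_cmult_right[OF A0])
    have "(\<lambda>\<alpha>. (d / \<rho>)^2 * (\<bar>c \<alpha>\<bar> * \<rho> ^ deg \<alpha>)) summable_on I"
      using A0' by (auto simp: summable_on_def)
    hence S1: "(\<lambda>\<alpha>. norm ((d / \<rho>)^2 * (\<bar>c \<alpha>\<bar> * \<rho> ^ deg \<alpha>))) summable_on I"
      using \<rho> by (simp add: abs_mult)
    have "(\<lambda>\<alpha>. norm (if \<alpha> \<in> J then 0 else g \<alpha>)) summable_on I"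
      by (rule Infinite_Sum.abs_summable_on_comparison_test[OF S1]) (metis (no_types, lifting) bnd abs_ge_self order_trans real_norm_def)
    then obtain N where N: "((\<lambda>\<alpha>. norm (if \<alpha> \<in> J then 0 else g \<alpha>)) has_sum N) I"
      using has_sum_infsum by blast
    have "norm (f y - sum g J) \<le> N" by (rule norm_has_sum_bound[OF N R])
    also have "N \<le> (d / \<rho>)^2 * A0" by (rule has_sum_mono[OF N A0']) (use bnd in auto)
    finally show ?thesis using sJ \<rho> by (simp add: A_def d_def power_divide field_simps)
  qed
  thus ?thesis using \<rho> linL by blast
qed

lemma analytic_has_derivative:
  fixes f :: "'a::euclidean_space \<Rightarrow> real"
  assumes "real_analytic_at f p"
  shows "\<exists>D. (f has_derivative D) (at p)"
proof -
  obtain c0 L A \<rho> where \<rho>: "\<rho> > 0" and lin: "linear L"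
    and B: "\<And>y. norm (y - p) \<le> \<rho> \<Longrightarrow> \<bar>f y - c0 - L (y - p)\<bar> \<le> A * norm (y - p) ^ 2"
    using analytic_bound[OF assms] by blast
  have L0: "L 0 = 0" using lin by (rule linear_0)
  have "\<bar>f p - c0 - L (p - p)\<bar> \<le> A * norm (p - p) ^ 2" by (rule B) (use \<rho> in simp)
  hence fp: "f p = c0" using L0 by simp
  have "(f has_derivative L) (at p within UNIV)"
    unfolding has_derivative_within_alt
  proof (intro conjI allI impI)
    show "bounded_linear L" using lin by (simp add: linear_conv_bounded_linear)
    fix e :: real assume e: "e > 0"
    define d where "d = min \<rho> (e / (\<bar>A\<bar> + 1))"
    have d: "d > 0" using e \<rho> by (simp add: d_def)
    show "\<exists>d>0. \<forall>y\<in>UNIV. norm (y - p) < d \<longrightarrow> norm (f y - f p - L (y - p)) \<le> e * norm (y - p)"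
    proof (intro exI[of _ d] conjI ballI impI d)
      fix y assume y: "norm (y - p) < d"
      define n where "n = norm (y - p)"
      have n0: "n \<ge> 0" by (simp add: n_def)
      have "norm (f y - f p - L (y - p)) \<le> A * n ^ 2" using B[of y] y fp by (simp add: d_def n_def)
      also have "\<dots> \<le> (\<bar>A\<bar> + 1) * n ^ 2" by (rule mult_right_mono) auto
      also have "\<dots> = (\<bar>A\<bar> + 1) * n * n" by (simp add: power2_eq_square)
      also have "\<dots> \<le> e * n"
      proof -
        have "(\<bar>A\<bar> + 1) * n \<le> e" using y unfolding n_def d_def by (simp add: field_simps)
        thus ?thesis using n0 by (rule mult_right_mono)
      qed
      finally show "norm (f y - f p - L (y - p)) \<le> e * norm (y - p)" by (simp add: n_def)
    qed
  qed
  thus ?thesis by blast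
qed

lemma vec_has_derivative:
  fixes F :: "'a::euclidean_space \<Rightarrow> real^'m" and D :: "'m \<Rightarrow> 'a \<Rightarrow> real"
  assumes D: "\<And>i. ((\<lambda>y. F y $ i) has_derivative D i) (at p)"
  shows "(F has_derivative (\<lambda>v. \<chi> i. D i v)) (at p)"
proof (subst has_derivative_componentwise_within, rule ballI)
  fix b :: "real^'m" assume "b \<in> Basis"
  then obtain i and u :: real where "u \<in> Basis" "b = axis i u" unfolding Basis_vec_def by blast
  hence b: "b = axis i 1" by simp
  have e1: "(\<lambda>x. F x \<bullet> b) = (\<lambda>y. F y $ i)" by (simp add: b inner_axis)
  have e2: "(\<lambda>x. (\<chi> i. D i x) \<bullet> b) = D i" by (simp add: b inner_axis)
  show "((\<lambda>x. F x \<bullet> b) has_derivative (\<lambda>x. (\<chi> i. D i x) \<bullet> b)) (at p)"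
    unfolding e1 e2 by (rule D)
qed

lemma analytic_map_deriv:
  fixes F :: "'a::euclidean_space \<Rightarrow> real^'m"
  assumes "analytic_map_on U F" "p \<in> U"
  shows "\<exists>D. (F has_derivative D) (at p)"
proof -
  have ex: "\<exists>D. ((\<lambda>y. F y $ i) has_derivative D) (at p)" for i
    by (rule analytic_has_derivative) (use assms in \<open>simp add: analytic_map_on_def\<close>)
  define D where "D i = (SOME D. ((\<lambda>y. F y $ i) has_derivative D) (at p))" for i
  have D: "((\<lambda>y. F y $ i) has_derivative D i) (at p)" for i
    unfolding D_def by (rule someI_ex[OF ex])
  show ?thesis using vec_has_derivative[OF D] by blast
qed

lemma adjoint_grad:
  fixes D :: "real^'n \<Rightarrow> real^'m"
  assumes "linear D"
  shows "(\<Sum>i\<in>UNIV. (a $ i) *\<^sub>R (\<chi> j. D (axis j 1) $ i)) = adjoint D a"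
proof (rule vec_eq_iff[THEN iffD2], rule allI)
  fix j
  have "adjoint D a $ j = axis j 1 \<bullet> adjoint D a" by (simp add: inner_axis')
  also have "\<dots> = D (axis j 1) \<bullet> a" by (rule adjoint_works[OF assms])
  also have "\<dots> = (\<Sum>i\<in>UNIV. a $ i * D (axis j 1) $ i)" by (simp add: inner_vec_def mult.commute)
  finally show "(\<Sum>i\<in>UNIV. (a $ i) *\<^sub>R (\<chi> j. D (axis j 1) $ i)) $ j = adjoint D a $ j"
    by (simp add: sum_component)
qed

lemma min_norm_solution:
  fixes D :: "real^'n \<Rightarrow> real^'m"
  assumes lin: "linear D" and \<nu>: "\<nu> > 0" and bnd: "\<And>b. \<nu> * norm b \<le> norm (adjoint D b)"
  shows "\<exists>z. D z = c \<and> \<nu> * norm z \<le> norm c"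
proof -
  define M where "M = D \<circ> adjoint D"
  have linM: "linear M" unfolding M_def using lin by (intro linear_compose adjoint_linear) 
  have key: "adjoint D b \<bullet> adjoint D b = M b \<bullet> b" for b
    using adjoint_works[OF lin, of "adjoint D b" b] by (simp add: M_def)
  have "inj M"
  proof (rule linear_inj_on_iff_eq_0[THEN iffD2, OF linM, of UNIV, simplified], intro allI impI)
    fix b assume "M b = 0"
    hence "adjoint D b = 0" using key[of b] by simp
    hence "\<nu> * norm b \<le> 0" using bnd[of b] by simp
    thus "b = 0" using \<nu> by (simp add: mult_le_0_iff)
  qed
  hence "surj M" using linear_injective_imp_surjective[OF linM] by auto
  then obtain b where b: "M b = c" by (metis surjD)
  define z where "z = adjoint D b"
  have Dz: "D z = c" using b by (simp add: M_def z_def)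
  have "norm z ^ 2 = c \<bullet> b" using key[of b] b by (simp add: z_def power2_norm_eq_inner)
  also have "\<dots> \<le> norm c * norm b" by (rule norm_cauchy_schwarz)
  finally have z2: "norm z ^ 2 \<le> norm c * norm b" .
  have "\<nu> * norm z \<le> norm c"
  proof (cases "z = 0")
    case True thus ?thesis by simp
  next
    case False
    hence nz: "norm z > 0" by simp
    have "\<nu> * norm z * norm z = \<nu> * norm z ^ 2" by (simp add: power2_eq_square)
    also have "\<dots> \<le> \<nu> * (norm c * norm b)" using z2 \<nu> by simp
    also have "\<dots> = norm c * (\<nu> * norm b)" by simp
    also have "\<dots> \<le> norm c * norm z" using bnd[of b] by (simp add: z_def mult_left_mono)
    finally show ?thesis using nz by simp
  qed
  thus ?thesis using Dz by blast
qed

lemma tangent_step: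
  fixes G :: "real^'n \<Rightarrow> real^'m" and R :: "real^'m \<Rightarrow> real^'n"
  assumes r: "r > 0" and Gc: "continuous_on (ball x r) G" and GD: "(G has_derivative D) (at x)"
    and linR: "linear R" and DR: "\<And>u. D (R u) = u" and Dz: "D z0 = c0"
    and c: "(c \<longlongrightarrow> c0) (at_right 0)" and e: "e > 0"
  shows "\<forall>\<^sub>F h in at_right 0. \<exists>u. norm (u - c0) \<le> e \<and>
            G (x + h *\<^sub>R (z0 + R (u - c0))) = G x + h *\<^sub>R c h"
proof -
  define e' where "e' = min (e / 2) (1 / 2)"
  have e': "e' > 0" "2 * e' \<le> e" "2 * e' \<le> 1" using e by (auto simp: e'_def)
  have linD: "linear D" using GD by (simp add: has_derivative_linear)
  obtain B where B: "B > 0" "\<And>v. norm (R v) \<le> B * norm v"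
    using linear_bounded_pos[OF linR] by blast
  define M where "M = norm z0 + B"
  have M: "M > 0" using B by (simp add: M_def add_nonneg_pos)
  define \<eta> where "\<eta> = e' / M"
  have \<eta>: "\<eta> > 0" using e' M by (simp add: \<eta>_def)
  obtain \<delta> where \<delta>: "\<delta> > 0" and Dd: "\<And>y. norm (y - x) < \<delta> \<Longrightarrow>
      norm (G y - G x - D (y - x)) \<le> \<eta> * norm (y - x)"
    using GD \<eta> unfolding has_derivative_within_alt by blast
  have w_bound: "norm (z0 + R (u - c0)) \<le> M" if "u \<in> cball c0 1" for u
  proof -
    have "norm (z0 + R (u - c0)) \<le> norm z0 + norm (R (u - c0))" by (rule norm_triangle_ineq)
    also have "\<dots> \<le> norm z0 + B * norm (u - c0)" using B(2) by simp
    also have "\<dots> \<le> norm z0 + B * 1" using that B(1)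
      by (intro add_left_mono mult_left_mono) (auto simp: dist_norm norm_minus_commute)
    finally show ?thesis by (simp add: M_def)
  qed
  have E1: "\<forall>\<^sub>F h in at_right 0. dist (c h) c0 < e'" using tendstoD[OF c e'(1)] .
  have E2: "\<forall>\<^sub>F h in at_right (0::real). 0 < h \<and> h * M < min \<delta> r"
  proof -
    have "min \<delta> r / M > 0" using \<delta> r M by simp
    hence "\<exists>b>0. \<forall>h>0. h < b \<longrightarrow> 0 < h \<and> h * M < min \<delta> r"
      using M by (intro exI[of _ "min \<delta> r / M"]) (auto simp: field_simps)
    thus ?thesis by (simp add: eventually_at_right_field)
  qed
  show ?thesis
  proof (rule eventually_mono[OF eventually_conj[OF E1 E2]])
    fix h assume H: "dist (c h) c0 < e' \<and> 0 < h \<and> h * M < min \<delta> r"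
    hence h: "h > 0" and hM: "h * M < \<delta>" "h * M < r" and ch: "dist (c h) c0 < e'" by auto
    define w where "w u = z0 + R (u - c0)" for u
    have Dw: "D (w u) = u" for u
      using linD by (simp add: w_def linear_add DR Dz)
    have hw: "norm (h *\<^sub>R w u) < min \<delta> r" if "u \<in> cball c0 1" for u
    proof -
      have "norm (h *\<^sub>R w u) = h * norm (w u)" using h by simp
      also have "\<dots> \<le> h * M" using w_bound[OF that] h by (simp add: w_def)
      finally show ?thesis using hM by simp
    qed
    define \<Phi> where "\<Phi> u = u - (1 / h) *\<^sub>R (G (x + h *\<^sub>R w u) - G x) + c h" for u
    have err: "norm (\<Phi> u - c h) \<le> e'" if u: "u \<in> cball c0 1" for u
    proof -
      have "\<Phi> u - c h = - ((1 / h) *\<^sub>R (G (x + h *\<^sub>R w u) - G x - D (h *\<^sub>R w u)))"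
        using h linD by (simp add: \<Phi>_def linear_cmul Dw algebra_simps)
      hence "norm (\<Phi> u - c h) = (1 / h) * norm (G (x + h *\<^sub>R w u) - G x - D (h *\<^sub>R w u))"
        using h by simp
      also have "\<dots> \<le> (1 / h) * (\<eta> * norm (h *\<^sub>R w u))"
        using Dd[of "x + h *\<^sub>R w u"] hw[OF u] h by (intro mult_left_mono) auto
      also have "\<dots> = \<eta> * norm (w u)" using h by simp
      also have "\<dots> \<le> \<eta> * M" using w_bound[OF u] \<eta> by (intro mult_left_mono) (auto simp: w_def)
      also have "\<dots> = e'" using M by (simp add: \<eta>_def)
      finally show ?thesis .
    qed
    have maps: "\<Phi> \<in> cball c0 1 \<rightarrow> cball c0 1"
    proof
      fix u assume u: "u \<in> cball c0 1"
      have "dist c0 (\<Phi> u) \<le> dist c0 (c h) + dist (c h) (\<Phi> u)" by (rule dist_triangle)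
      also have "\<dots> \<le> e' + e'" using ch err[OF u] by (simp add: dist_norm norm_minus_commute)
      finally show "\<Phi> u \<in> cball c0 1" using e' by simp
    qed
    have cont: "continuous_on (cball c0 1) \<Phi>"
    proof -
      have Rc: "continuous_on UNIV R" using linR
        by (intro linear_continuous_on) (simp add: linear_conv_bounded_linear)
      have "continuous_on (cball c0 1) (\<lambda>u. R (u - c0))"
        by (rule continuous_on_compose2[OF Rc]) (auto intro!: continuous_intros)
      hence lw: "continuous_on (cball c0 1) (\<lambda>u. x + h *\<^sub>R w u)"
        unfolding w_def by (intro continuous_intros)
      have sub: "(\<lambda>u. x + h *\<^sub>R w u) ` cball c0 1 \<subseteq> ball x r"
        using hw by (auto simp: dist_norm)
      have "continuous_on (cball c0 1) (\<lambda>u. G (x + h *\<^sub>R w u))"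
        by (rule continuous_on_compose2[OF Gc lw sub])
      thus ?thesis unfolding \<Phi>_def by (intro continuous_intros)
    qed
    obtain u where u: "u \<in> cball c0 1" "\<Phi> u = u"
      using brouwer_ball[OF zero_less_one cont maps] by blast
    have eq: "(1 / h) *\<^sub>R (G (x + h *\<^sub>R w u) - G x) = c h"
      using u(2) unfolding \<Phi>_def by (simp add: algebra_simps)
    have "G (x + h *\<^sub>R w u) - G x = h *\<^sub>R ((1 / h) *\<^sub>R (G (x + h *\<^sub>R w u) - G x))"
      using h by simp
    hence "G (x + h *\<^sub>R w u) - G x = h *\<^sub>R c h" using eq by simp
    hence "G (x + h *\<^sub>R w u) = G x + h *\<^sub>R c h" by (simp add: algebra_simps)
    moreover have "norm (u - c0) \<le> e"
    proof -
      have "norm (u - c0) \<le> norm (u - c h) + norm (c h - c0)" using norm_triangle_ineq[of "u - c h" "c h - c0"] by simp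
      also have "\<dots> \<le> e' + e'" using err[OF u(1)] u(2) ch by (simp add: dist_norm)
      finally show ?thesis using e' by simp
    qed
    ultimately show "\<exists>u. norm (u - c0) \<le> e \<and> G (x + h *\<^sub>R (z0 + R (u - c0))) = G x + h *\<^sub>R c h"
      unfolding w_def by blast
  qed
qed

lemma diff_quot_lim:
  fixes a b :: real
  shows "((\<lambda>h. ((a + h * b) ^ L - a ^ L) / h) \<longlongrightarrow> real L * a ^ (L - 1) * b) (at_right 0)"
proof -
  have "((\<lambda>h. (a + h * b) ^ L) has_field_derivative real L * a ^ (L - 1) * b) (at 0)"
    by (auto intro!: derivative_eq_intros)
  hence "((\<lambda>h. ((a + (0 + h) * b) ^ L - (a + 0 * b) ^ L) / h) \<longlongrightarrow> real L * a ^ (L - 1) * b) (at 0)"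
    unfolding has_field_derivative_iff by simp
  hence "((\<lambda>h. ((a + h * b) ^ L - a ^ L) / h) \<longlongrightarrow> real L * a ^ (L - 1) * b) (at 0)" by simp
  thus ?thesis by (rule tendsto_mono[OF at_le, rotated]) simp
qed

lemma tangent_vec:
  fixes F :: "(real^'n) \<times> real \<Rightarrow> real^'m" and R :: "real^'m \<Rightarrow> real^'n"
    and X :: "((real^'n) \<times> real \<times> (real^'m)) set"
  assumes X: "X = {(y, \<tau>, \<sigma>). \<forall>i. F (y, \<tau>) $ i = (\<sigma> $ i) ^ L}"
    and pX: "(x, t, s) \<in> X"
    and r: "r > 0" and Gc: "continuous_on (ball x r) (\<lambda>y. F (y, t))"
    and GD: "((\<lambda>y. F (y, t)) has_derivative D) (at x)"
    and linR: "linear R" and DR: "\<And>u. D (R u) = u"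
    and Dz: "D z0 = (\<chi> i. real L * (s $ i) ^ (L - 1) * w $ i)"
  shows "(z0, 0, w) \<in> tangent_space {q \<in> X. fst (snd q) = t} (x, t, s)"
proof -
  define c0 where "c0 = (\<chi> i. real L * (s $ i) ^ (L - 1) * w $ i)"
  define c where "c h = (\<chi> i. ((s $ i + h * w $ i) ^ L - (s $ i) ^ L) / h)" for h :: real
  have climit: "(c \<longlongrightarrow> c0) (at_right 0)"
    unfolding c_def c0_def by (intro tendsto_vec_lambda diff_quot_lim)
  define G where "G y = F (y, t)" for y
  have step: "\<forall>\<^sub>F h in at_right 0. \<exists>u. norm (u - c0) \<le> e \<and>
            G (x + h *\<^sub>R (z0 + R (u - c0))) = G x + h *\<^sub>R c h" if "e > 0" for e
    by (rule tangent_step[OF r _ _ linR DR _ climit that])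
       (use Gc GD Dz in \<open>simp_all add: G_def[abs_def] c0_def\<close>)
  have "\<exists>p. 0 < fst p \<and> fst p < inverse (real (Suc j)) \<and> norm (snd p - c0) \<le> inverse (real (Suc j)) \<and>
            G (x + fst p *\<^sub>R (z0 + R (snd p - c0))) = G x + fst p *\<^sub>R c (fst p)" for j
  proof -
    have "\<exists>b>0. \<forall>h>0. h < b \<longrightarrow> (\<exists>u. norm (u - c0) \<le> inverse (real (Suc j)) \<and>
            G (x + h *\<^sub>R (z0 + R (u - c0))) = G x + h *\<^sub>R c h)"
      using step[of "inverse (real (Suc j))"] by (simp add: eventually_at_right_field)
    then obtain b where b: "b > 0" and bP: "\<And>h. h > 0 \<Longrightarrow> h < b \<Longrightarrow> (\<exists>u. norm (u - c0) \<le> inverse (real (Suc j)) \<and>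
            G (x + h *\<^sub>R (z0 + R (u - c0))) = G x + h *\<^sub>R c h)" by blast
    define h where "h = min b (inverse (real (Suc j))) / 2"
    have ip: "inverse (real (Suc j)) > 0" by simp
    have h: "h > 0" "h < b" "h < inverse (real (Suc j))" using b ip unfolding h_def by linarith+
    obtain u where "norm (u - c0) \<le> inverse (real (Suc j))"
        "G (x + h *\<^sub>R (z0 + R (u - c0))) = G x + h *\<^sub>R c h" using bP[OF h(1,2)] by blast
    thus ?thesis using h by (intro exI[of _ "(h, u)"]) simp
  qed
  hence "\<exists>f. \<forall>j. 0 < fst (f j) \<and> fst (f j) < inverse (real (Suc j)) \<and> norm (snd (f j) - c0) \<le> inverse (real (Suc j)) \<and>
            G (x + fst (f j) *\<^sub>R (z0 + R (snd (f j) - c0))) = G x + fst (f j) *\<^sub>R c (fst (f j))"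
    by (intro choice allI)
  then obtain f where f: "\<And>j. 0 < fst (f j) \<and> fst (f j) < inverse (real (Suc j)) \<and> norm (snd (f j) - c0) \<le> inverse (real (Suc j)) \<and>
            G (x + fst (f j) *\<^sub>R (z0 + R (snd (f j) - c0))) = G x + fst (f j) *\<^sub>R c (fst (f j))"
    by blast
  define h where "h j = fst (f j)" for j
  define u where "u j = snd (f j)" for j
  have hpos: "h j > 0" and hlt: "h j < inverse (real (Suc j))" and ub: "norm (u j - c0) \<le> inverse (real (Suc j))"
    and Geq: "G (x + h j *\<^sub>R (z0 + R (u j - c0))) = G x + h j *\<^sub>R c (h j)" for j
    using f[of j] by (simp_all add: h_def u_def)
  have inv0: "(\<lambda>j. inverse (real (Suc j))) \<longlonglongrightarrow> 0" by (rule LIMSEQ_inverse_real_of_nat)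
  have h0: "h \<longlonglongrightarrow> 0"
  proof (rule Lim_null_comparison[OF _ inv0], rule always_eventually, rule allI)
    fix j show "norm (h j) \<le> inverse (real (Suc j))" using hpos[of j] hlt[of j] by simp
  qed
  have u0: "(\<lambda>j. u j - c0) \<longlonglongrightarrow> 0"
    by (rule Lim_null_comparison[OF _ inv0], rule always_eventually) (use ub in blast)
  have blR: "bounded_linear R" using linR by (simp add: linear_conv_bounded_linear)
  have Ru: "(\<lambda>j. R (u j - c0)) \<longlonglongrightarrow> 0"
    using bounded_linear.tendsto[OF blR u0] blR by (simp add: linear_simps)
  have vlim: "(\<lambda>j. z0 + R (u j - c0)) \<longlonglongrightarrow> z0" using tendsto_add[OF tendsto_const Ru] by simp
  define y where "y j = (x + h j *\<^sub>R (z0 + R (u j - c0)), t, s + h j *\<^sub>R w)" for j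
  define k where "k j = inverse (h j)" for j
  have yin: "y j \<in> {q \<in> X. fst (snd q) = t}" for j
  proof -
    have Fx: "F (x, t) $ i = (s $ i) ^ L" for i using pX by (simp add: X)
    have "F (x + h j *\<^sub>R (z0 + R (u j - c0)), t) $ i = ((s + h j *\<^sub>R w) $ i) ^ L" for i
    proof -
      have "F (x + h j *\<^sub>R (z0 + R (u j - c0)), t) $ i = F (x, t) $ i + h j * c (h j) $ i"
        using arg_cong[OF Geq[of j], of "\<lambda>v. v $ i"] by (simp add: G_def)
      also have "\<dots> = (s $ i + h j * w $ i) ^ L" using hpos[of j] by (simp add: Fx c_def)
      finally show ?thesis by simp
    qed
    thus ?thesis by (simp add: y_def X)
  qed
  have kpos: "k j > 0" for j using hpos[of j] by (simp add: k_def)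
  have ylim: "y \<longlonglongrightarrow> (x, t, s)"
  proof -
    have "(\<lambda>j. x + h j *\<^sub>R (z0 + R (u j - c0))) \<longlonglongrightarrow> x + 0 *\<^sub>R z0"
      by (intro tendsto_intros h0 vlim)
    moreover have "(\<lambda>j. s + h j *\<^sub>R w) \<longlonglongrightarrow> s + 0 *\<^sub>R w" by (intro tendsto_intros h0)
    ultimately show ?thesis unfolding y_def by (intro tendsto_Pair tendsto_const) simp_all
  qed
  have "(\<lambda>j. k j *\<^sub>R (y j - (x, t, s))) = (\<lambda>j. (z0 + R (u j - c0), 0, w))"
  proof
    fix j have "inverse (h j) * h j = 1" using hpos[of j] by simp
    thus "k j *\<^sub>R (y j - (x, t, s)) = (z0 + R (u j - c0), 0, w)" by (simp add: k_def y_def)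
  qed
  moreover have "(\<lambda>j. (z0 + R (u j - c0), 0::real, w)) \<longlonglongrightarrow> (z0, 0, w)"
    by (intro tendsto_Pair vlim tendsto_const)
  ultimately have "(\<lambda>j. k j *\<^sub>R (y j - (x, t, s))) \<longlonglongrightarrow> (z0, 0, w)" by simp
  thus ?thesis unfolding tangent_space_def using yin kpos ylim by blast
qed

lemma tangent_mid0:
  fixes X :: "('a::real_normed_vector \<times> real \<times> 'b::real_normed_vector) set"
  assumes "v \<in> tangent_space {q \<in> X. fst (snd q) = t} (a, t, b)"
  shows "fst (snd v) = 0"
proof -
  obtain y c where y: "\<forall>k. y k \<in> {q \<in> X. fst (snd q) = t} \<and> c k > (0::real)"
    and lim: "(\<lambda>k. c k *\<^sub>R (y k - (a, t, b))) \<longlonglongrightarrow> v"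
    using assms unfolding tangent_space_def by blast
  have "(\<lambda>k. fst (snd (c k *\<^sub>R (y k - (a, t, b))))) \<longlonglongrightarrow> fst (snd v)"
    by (intro tendsto_fst tendsto_snd lim)
  moreover have "(\<lambda>k. fst (snd (c k *\<^sub>R (y k - (a, t, b))))) = (\<lambda>k. 0)"
    using y by (auto simp: fun_eq_iff)
  ultimately have "(\<lambda>k. 0::real) \<longlonglongrightarrow> fst (snd v)" by simp
  thus ?thesis by (simp add: LIMSEQ_const_iff)
qed

lemma final_alg:
  fixes T :: "((real^'n) \<times> real \<times> (real^'m)) set"
  assumes T: "subspace T" "dim T = CARD('n)"
    and mid: "\<And>v. v \<in> T \<Longrightarrow> fst (snd v) = 0"
    and w: "\<And>w. (0, 0, w) \<in> T"
  shows "\<exists>A :: (real^'n) set. subspace A \<and> dim A = CARD('n) - CARD('m) \<and>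
           T = A \<times> ({0} \<times> UNIV)"
proof -
  define A where "A = {v. (v, 0, 0) \<in> T}"
  have sA: "subspace A" unfolding A_def subspace_def
  proof (intro conjI allI ballI impI)
    show "0 \<in> {v. (v, 0::real, 0::real^'m) \<in> T}" using subspace_0[OF T(1)] by (simp add: zero_prod_def)
  next
    fix x y assume "x \<in> {v. (v, 0::real, 0::real^'m) \<in> T}" "y \<in> {v. (v, 0::real, 0::real^'m) \<in> T}"
    thus "x + y \<in> {v. (v, 0::real, 0::real^'m) \<in> T}" using subspace_add[OF T(1), of "(x,0,0)" "(y,0,0)"] by simp
  next
    fix c :: real and x assume "x \<in> {v. (v, 0::real, 0::real^'m) \<in> T}"
    thus "c *\<^sub>R x \<in> {v. (v, 0::real, 0::real^'m) \<in> T}" using subspace_scale[OF T(1), of "(x,0,0)" c] by simp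
  qed
  have TA: "T = A \<times> ({0} \<times> UNIV)"
  proof (intro set_eqI iffI)
    fix p assume p: "p \<in> T"
    obtain v \<tau> \<sigma> where pe: "p = (v, \<tau>, \<sigma>)" by (cases p) auto
    have \<tau>: "\<tau> = 0" using mid[OF p] pe by simp
    have "(v, \<tau>, \<sigma>) - (0, 0, \<sigma>) \<in> T" using subspace_diff[OF T(1) p[unfolded pe] w] .
    moreover have e: "(v, \<tau>, \<sigma>) - (0, 0, \<sigma>) = (v, 0::real, 0::real^'m)" using \<tau> by (simp add: zero_prod_def)
    ultimately have "(v, 0::real, 0::real^'m) \<in> T" by simp
    hence "v \<in> A" by (simp add: A_def)
    thus "p \<in> A \<times> ({0} \<times> UNIV)" using pe \<tau> by simp
  next
    fix p assume "p \<in> A \<times> ({0::real} \<times> (UNIV :: (real^'m) set))"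
    then obtain v \<sigma> where pe: "p = (v, 0, \<sigma>)" and vA: "v \<in> A" by blast
    have v: "(v, 0, 0) \<in> T" using vA by (simp add: A_def)
    have "(v, 0, 0) + (0, 0, \<sigma>) \<in> T" using subspace_add[OF T(1) v w] .
    thus "p \<in> T" using pe by simp
  qed
  have s2: "subspace ({0::real} \<times> (UNIV :: (real^'m) set))"
    by (intro subspace_Times subspace_single_0 subspace_UNIV)
  have "dim T = dim A + dim ({0::real} \<times> (UNIV :: (real^'m) set))"
    unfolding TA by (rule dim_Times[OF sA s2])
  moreover have "dim ({0::real} \<times> (UNIV :: (real^'m) set)) = CARD('m)"
    by (simp add: dim_Times[OF subspace_single_0 subspace_UNIV])
  ultimately have "dim A = CARD('n) - CARD('m)" using T(2) by simp
  thus ?thesis using sA TA by blast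
qed

lemma nu_bound:
  fixes F :: "(real^'n) \<times> real \<Rightarrow> real^'m" and D :: "real^'n \<Rightarrow> real^'m"
  assumes lin: "linear D" and fr: "frechet_derivative (\<lambda>y. F (y, t)) (at x) = D"
  shows "nu F t x * norm b \<le> norm (adjoint D b)"
proof -
  have eq: "(\<Sum>i\<in>UNIV. (a $ i) *\<^sub>R grad_x F i x t) = adjoint D a" for a
    unfolding grad_x_def fr by (rule adjoint_grad[OF lin])
  have nu: "nu F t x = Inf {norm (adjoint D a) | a :: real^'m. norm a = 1}"
    unfolding nu_def eq ..
  have linA: "linear (adjoint D)" by (rule adjoint_linear[OF lin])
  show ?thesis
  proof (cases "b = 0")
    case True thus ?thesis using linA by (simp add: linear_0)
  next
    case False
    define a where "a = (1 / norm b) *\<^sub>R b"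
    have na: "norm a = 1" using False by (simp add: a_def)
    have "nu F t x \<le> norm (adjoint D a)" unfolding nu
      by (rule cInf_lower) (use na in \<open>auto intro!: bdd_belowI[of _ 0]\<close>)
    also have "adjoint D a = (1 / norm b) *\<^sub>R adjoint D b"
      unfolding a_def by (rule linear_cmul[OF linA])
    finally have "nu F t x \<le> norm (adjoint D b) / norm b" by simp
    thus ?thesis using False by (simp add: field_simps)
  qed
qed

lemma c0_bound:
  fixes s w :: "real^'m"
  assumes w: "norm w \<le> 1"
  shows "norm (\<chi> i. real L * (s $ i) ^ (L - 1) * w $ i) \<le>
           real CARD('m) * real L * (Max (range (\<lambda>i. \<bar>s $ i\<bar>))) ^ (L - 1)"
proof -
  define \<mu> where "\<mu> = Max (range (\<lambda>i. \<bar>s $ i\<bar>))"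
  have si: "\<bar>s $ i\<bar> \<le> \<mu>" for i unfolding \<mu>_def by (rule Max_ge) auto
  have \<mu>0: "0 \<le> \<mu>" using si[of undefined] abs_ge_zero order_trans by blast
  have "norm (\<chi> i. real L * (s $ i) ^ (L - 1) * w $ i) \<le> (\<Sum>i\<in>UNIV. \<bar>(\<chi> i. real L * (s $ i) ^ (L - 1) * w $ i) $ i\<bar>)"
    by (rule norm_le_l1_cart)
  also have "\<dots> \<le> (\<Sum>i\<in>(UNIV::'m set). real L * \<mu> ^ (L - 1))"
  proof (rule sum_mono)
    fix i :: 'm
    have "\<bar>(\<chi> i. real L * (s $ i) ^ (L - 1) * w $ i) $ i\<bar> = real L * \<bar>s $ i\<bar> ^ (L - 1) * \<bar>w $ i\<bar>"
      by (simp add: abs_mult power_abs)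
    also have "\<dots> \<le> real L * \<mu> ^ (L - 1) * 1"
    proof (intro mult_mono mult_left_mono power_mono si)
      show "\<bar>w $ i\<bar> \<le> 1" using component_le_norm_cart[of w i] w by linarith
    qed (use \<mu>0 in auto)
    finally show "\<bar>(\<chi> i. real L * (s $ i) ^ (L - 1) * w $ i) $ i\<bar> \<le> real L * \<mu> ^ (L - 1)" by simp
  qed
  also have "\<dots> = real CARD('m) * real L * \<mu> ^ (L - 1)" by simp
  finally show ?thesis by (simp add: \<mu>_def)
qed

lemma F_ge:
  fixes s v :: "real^'m"
  assumes "\<And>i. v $ i = (s $ i) ^ L"
  shows "(Max (range (\<lambda>i. \<bar>s $ i\<bar>))) ^ L \<le> norm v"
proof -
  have "Max (range (\<lambda>i. \<bar>s $ i\<bar>)) \<in> range (\<lambda>i. \<bar>s $ i\<bar>)" by (rule Max_in) auto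
  then obtain i where i: "Max (range (\<lambda>i. \<bar>s $ i\<bar>)) = \<bar>s $ i\<bar>" by (metis rangeE)
  have "\<bar>s $ i\<bar> ^ L = \<bar>v $ i\<bar>" using assms by (simp add: power_abs)
  also have "\<dots> \<le> norm v" by (rule component_le_norm_cart)
  finally show ?thesis using i by simp
qed

lemma key_k:
  fixes F :: "(real^'n) \<times> real \<Rightarrow> real^'m"
    and X :: "((real^'n) \<times> real \<times> (real^'m)) set" and w :: "real^'m"
  assumes X: "X = {(y, \<tau>, \<sigma>). \<forall>i. F (y, \<tau>) $ i = (\<sigma> $ i) ^ L}"
    and pX: "(x, t, s) \<in> X" and U: "open U" "(x, t) \<in> U" and anal: "analytic_map_on U F"
    and reg: "(x, t) \<notin> Sing (Ftilde F)"
    and loj: "norm (F (x, t)) powr \<theta> \<le> C * nu F t x"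
    and C: "C > 0" and \<theta>: "\<theta> > 0" and L2: "L \<ge> 2" and w: "norm w \<le> 1"
  shows "\<exists>z0. (z0, 0, w) \<in> tangent_space {q \<in> X. fst (snd q) = t} (x, t, s) \<and>
           norm z0 \<le> C * (real CARD('m) * real L) *
              (Max (range (\<lambda>i. \<bar>s $ i\<bar>))) powr (real L - 1 - real L * \<theta>)"
proof -
  define \<mu> where "\<mu> = Max (range (\<lambda>i. \<bar>s $ i\<bar>))"
  define K where "K = real CARD('m) * real L"
  define a where "a = real L - 1 - real L * \<theta>"
  define c0 where "c0 = (\<chi> i. real L * (s $ i) ^ (L - 1) * w $ i)"
  have Fs: "F (x, t) $ i = (s $ i) ^ L" for i using pX by (simp add: X)
  obtain DF where DF: "(F has_derivative DF) (at (x, t))"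
    using analytic_map_deriv[OF anal U(2)] by blast
  define D where "D v = DF (v, 0)" for v
  have pd: "((\<lambda>y. (y, t)) has_derivative (\<lambda>v. (v, 0))) (at x)"
    by (intro has_derivative_Pair has_derivative_ident has_derivative_const)
  have GD: "((\<lambda>y. F (y, t)) has_derivative D) (at x)"
    using diff_chain_at[OF pd DF] by (simp add: comp_def D_def[abs_def])
  have fr: "frechet_derivative (\<lambda>y. F (y, t)) (at x) = D"
    using frechet_derivative_at[OF GD] by simp
  have linD: "linear D" using GD by (rule has_derivative_linear)
  have Ft: "Ftilde F = (\<lambda>z. (F z, snd z))" unfolding Ftilde_def by (simp add: case_prod_beta')
  have FtD: "(Ftilde F has_derivative (\<lambda>z. (DF z, snd z))) (at (x, t))"
    unfolding Ft by (intro has_derivative_Pair DF has_derivative_snd has_derivative_ident)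
  have "surj (\<lambda>z. (DF z, snd z))"
  proof -
    have "surj (frechet_derivative (Ftilde F) (at (x, t)))" using reg unfolding Sing_def by simp
    thus ?thesis unfolding frechet_derivative_at[OF FtD, symmetric] .
  qed
  hence S: "\<forall>y. \<exists>z. y = (DF z, snd z)" unfolding surj_def .
  have surjD: "surj D" unfolding surj_def
  proof
    fix u
    obtain z where z: "(u, 0) = (DF z, snd z)" using S by blast
    hence u: "u = DF z" and z2: "snd z = 0" by simp_all
    have "z = (fst z, 0)" using z2 by (cases z) simp
    hence "D (fst z) = DF z" unfolding D_def by simp
    thus "\<exists>v. u = D v" using u by metis
  qed
  obtain R where linR: "linear R" and DR0: "D \<circ> R = id"
    using linear_surjective_right_inverse[OF linD surjD] by blast
  have DR: "D (R u) = u" for u using fun_cong[OF DR0, of u] by simp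
  obtain r where r: "r > 0" and rb: "ball (x, t) r \<subseteq> U" using U open_contains_ball by blast
  have Gc: "continuous_on (ball x r) (\<lambda>y. F (y, t))"
  proof (rule continuous_at_imp_continuous_on, rule ballI)
    fix y assume y: "y \<in> ball x r"
    have "(y, t) \<in> ball (x, t) r" using y by (simp add: dist_Pair_Pair)
    hence "(y, t) \<in> U" using rb by blast
    then obtain D' where "(F has_derivative D') (at (y, t))" using analytic_map_deriv[OF anal] by blast
    hence cF: "isCont F (y, t)" by (rule has_derivative_continuous)
    have cp: "isCont (\<lambda>y. (y, t)) y" by (intro continuous_intros)
    show "isCont (\<lambda>y. F (y, t)) y" using continuous_at_compose[OF cp] cF by (simp add: comp_def)
  qed
  have \<mu>0: "\<mu> \<ge> 0"
  proof -
    have "\<bar>s $ undefined\<bar> \<le> \<mu>" unfolding \<mu>_def by (rule Max_ge) auto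
    thus ?thesis by linarith
  qed
  have K0: "K \<ge> 0" by (simp add: K_def)
  show ?thesis
  proof (cases "F (x, t) = 0")
    case True
    have "s $ i = 0" for i
    proof -
      have "(s $ i) ^ L = 0" using Fs[of i] True by simp
      thus ?thesis by simp
    qed
    hence "c0 = 0" using L2 by (simp add: c0_def vec_eq_iff)
    hence Dz: "D 0 = c0" using linD by (simp add: linear_0)
    have "(0, 0, w) \<in> tangent_space {q \<in> X. fst (snd q) = t} (x, t, s)"
      by (rule tangent_vec[OF X pX r Gc GD linR DR Dz[unfolded c0_def]])
    moreover have "norm (0::real^'n) \<le> C * K * \<mu> powr a" using C K0 by simp
    ultimately show ?thesis unfolding K_def \<mu>_def a_def by blast
  next
    case False
    define \<nu> where "\<nu> = nu F t x"
    have "0 < norm (F (x, t)) powr \<theta>" using False by simp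
    hence "0 < C * \<nu>" using loj unfolding \<nu>_def by linarith
    hence \<nu>: "\<nu> > 0" using C by (simp add: zero_less_mult_iff)
    have bnd: "\<And>b. \<nu> * norm b \<le> norm (adjoint D b)" unfolding \<nu>_def by (rule nu_bound[OF linD fr])
    obtain z0 where Dz: "D z0 = c0" and z0: "\<nu> * norm z0 \<le> norm c0"
      using min_norm_solution[OF linD \<nu> bnd] by blast
    have tv: "(z0, 0, w) \<in> tangent_space {q \<in> X. fst (snd q) = t} (x, t, s)"
      by (rule tangent_vec[OF X pX r Gc GD linR DR Dz[unfolded c0_def]])
    have \<mu>pos: "\<mu> > 0"
    proof (rule ccontr)
      assume "\<not> \<mu> > 0"
      hence "\<mu> = 0" using \<mu>0 by simp
      hence "s $ i = 0" for i using Max_ge[of "range (\<lambda>i. \<bar>s $ i\<bar>)" "\<bar>s $ i\<bar>"] by (simp add: \<mu>_def)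
      hence "F (x, t) = 0" using Fs L2 by (simp add: vec_eq_iff)
      thus False using False by simp
    qed
    have c0b: "norm c0 \<le> K * \<mu> ^ (L - 1)"
      using c0_bound[OF w, of L s] unfolding c0_def K_def \<mu>_def by simp
    have Fge: "\<mu> ^ L \<le> norm (F (x, t))" unfolding \<mu>_def by (rule F_ge[OF Fs])
    have "\<mu> powr (real L * \<theta>) = (\<mu> ^ L) powr \<theta>"
      using \<mu>pos by (simp add: powr_realpow[symmetric] powr_powr)
    also have "\<dots> \<le> norm (F (x, t)) powr \<theta>" using Fge \<mu>pos \<theta> by (intro powr_mono2) auto
    also have "\<dots> \<le> C * \<nu>" using loj by (simp add: \<nu>_def)
    finally have P: "\<mu> powr (real L * \<theta>) \<le> C * \<nu>" .
    have Ppos: "\<mu> powr (real L * \<theta>) > 0" using \<mu>pos by simp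
    have "norm z0 * \<mu> powr (real L * \<theta>) \<le> norm z0 * (C * \<nu>)"
      by (rule mult_left_mono[OF P]) simp
    also have "\<dots> = C * (\<nu> * norm z0)" by simp
    also have "\<dots> \<le> C * (K * \<mu> ^ (L - 1))" using z0 c0b C by (intro mult_left_mono) auto
    also have "\<mu> ^ (L - 1) = \<mu> powr (real L - 1)"
      using \<mu>pos L2 by (simp add: powr_realpow[symmetric] of_nat_diff)
    also have "\<mu> powr (real L - 1) = \<mu> powr a * \<mu> powr (real L * \<theta>)"
      unfolding a_def using \<mu>pos by (simp add: powr_add[symmetric])
    finally have "norm z0 * \<mu> powr (real L * \<theta>) \<le> (C * K * \<mu> powr a) * \<mu> powr (real L * \<theta>)"
      by (simp add: mult.assoc)
    hence "norm z0 \<le> C * K * \<mu> powr a" using Ppos by simp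
    thus ?thesis using tv unfolding K_def \<mu>_def a_def by blast
  qed
qed

theorem lemma3p4:
  fixes F :: "(real^'n) \<times> real \<Rightarrow> real^'m"
    and U :: "((real^'n) \<times> real) set"
    and \<theta> :: real and L :: nat
    and x0 :: "real^'n"
    and x :: "nat \<Rightarrow> real^'n" and t :: "nat \<Rightarrow> real" and s :: "nat \<Rightarrow> real^'m"
    and X :: "((real^'n) \<times> real \<times> (real^'m)) set"
    and T :: "((real^'n) \<times> real \<times> (real^'m)) set"
  assumes dims: "CARD('n) \<ge> CARD('m)" "CARD('m) \<ge> 2"
    and U: "open U" "(0, 0) \<in> U"
    and anal: "analytic_map_on U F"
    and F0: "F (0, 0) = 0"
    and theta: "0 < \<theta>" "\<theta> < 1"
    and loj: "\<And>y0. (y0, 0) \<in> U \<Longrightarrow> F (y0, 0) = 0 \<Longrightarrow> y0 \<in> Sing (\<lambda>y. F (y, 0)) \<Longrightarrow> y0 \<noteq> 0 \<Longrightarrow>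
               \<exists>c>0. \<forall>\<^sub>F (y, \<tau>) in nhds (y0, 0).
                  (y, \<tau>) \<notin> Sing (Ftilde F) \<longrightarrow> norm (F (y, \<tau>)) powr \<theta> \<le> c * nu F \<tau> y"
    and L: "\<theta> < (real L - 1) / real L"
    and X: "X = {(y, \<tau>, \<sigma>). \<forall>i. F (y, \<tau>) $ i = (\<sigma> $ i) ^ L}"
    and x0: "(x0, 0) \<in> U" "F (x0, 0) = 0" "x0 \<in> Sing (\<lambda>y. F (y, 0))" "x0 \<noteq> 0"
    and seqX: "\<And>k. (x k, t k, s k) \<in> X"
    and seqreg: "\<And>k. (x k, t k) \<notin> Sing (Ftilde F)"
    and seqlim: "(\<lambda>k. (x k, t k, s k)) \<longlonglongrightarrow> (x0, 0, 0)"
    and tdim: "\<And>k. dim (tangent_space {q \<in> X. fst (snd q) = t k} (x k, t k, s k)) = CARD('n)"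
    and Tgr: "subspace T" "dim T = CARD('n)"
    and conv: "grassmann_tendsto (\<lambda>k. tangent_space {q \<in> X. fst (snd q) = t k} (x k, t k, s k)) T"
  shows "\<exists>A :: (real^'n) set. subspace A \<and> dim A = CARD('n) - CARD('m) \<and>
           T = A \<times> ({0} \<times> UNIV)"
proof -
  have L2: "L \<ge> 2"
  proof (rule ccontr)
    assume "\<not> 2 \<le> L"
    hence "L = 0 \<or> L = 1" by auto
    thus False using L theta by auto
  qed
  define a where "a = real L - 1 - real L * \<theta>"
  have apos: "a > 0"
  proof -
    have "\<theta> * real L < real L - 1" using L L2 by (simp add: pos_less_divide_eq)
    thus ?thesis by (simp add: a_def algebra_simps)
  qed
  obtain C where C: "C > 0" and Cev: "\<forall>\<^sub>F (y, \<tau>) in nhds (x0, 0).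
      (y, \<tau>) \<notin> Sing (Ftilde F) \<longrightarrow> norm (F (y, \<tau>)) powr \<theta> \<le> C * nu F \<tau> y"
    using loj[OF x0] by blast
  have xl: "x \<longlonglongrightarrow> x0" using tendsto_fst[OF seqlim] by simp
  have tl: "t \<longlonglongrightarrow> 0" using tendsto_fst[OF tendsto_snd[OF seqlim]] by simp
  have sl: "s \<longlonglongrightarrow> 0" using tendsto_snd[OF tendsto_snd[OF seqlim]] by simp
  have xtl: "(\<lambda>k. (x k, t k)) \<longlonglongrightarrow> (x0, 0)" by (rule tendsto_Pair[OF xl tl])
  have EU: "\<forall>\<^sub>F k in sequentially. (x k, t k) \<in> U"
    by (rule topological_tendstoD[OF xtl U(1) x0(1)])
  have "\<forall>\<^sub>F k in sequentially. (\<lambda>(y, \<tau>). (y, \<tau>) \<notin> Sing (Ftilde F) \<longrightarrow>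
          norm (F (y, \<tau>)) powr \<theta> \<le> C * nu F \<tau> y) (x k, t k)"
    using filterlim_iff[THEN iffD1, OF xtl, rule_format, OF Cev] .
  hence EL: "\<forall>\<^sub>F k in sequentially. norm (F (x k, t k)) powr \<theta> \<le> C * nu F (t k) (x k)"
    by (rule eventually_mono) (use seqreg in simp)
  define \<mu> where "\<mu> k = Max (range (\<lambda>i. \<bar>s k $ i\<bar>))" for k
  define K where "K = real CARD('m) * real L"
  have \<mu>ge: "\<mu> k \<ge> 0" for k
  proof -
    have "\<bar>s k $ undefined\<bar> \<le> \<mu> k" unfolding \<mu>_def by (rule Max_ge) auto
    thus ?thesis by linarith
  qed
  have \<mu>le: "\<mu> k \<le> norm (s k)" for k
    unfolding \<mu>_def by (rule Max.boundedI) (auto intro: component_le_norm_cart)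
  have \<mu>l: "\<mu> \<longlonglongrightarrow> 0"
  proof (rule Lim_null_comparison[OF _ tendsto_norm_zero[OF sl]], rule always_eventually, rule allI)
    fix k show "norm (\<mu> k) \<le> norm (s k)" using \<mu>ge[of k] \<mu>le[of k] by simp
  qed
  have pw: "(\<lambda>k. \<mu> k powr a) \<longlonglongrightarrow> 0"
    by (rule tendsto_zero_powrI[OF \<mu>l tendsto_const _ apos]) (use \<mu>ge in simp)
  have pwl: "(\<lambda>k. C * K * \<mu> k powr a) \<longlonglongrightarrow> 0"
    using tendsto_mult[OF tendsto_const pw, of "C * K"] by simp
  define V where "V k = tangent_space {q \<in> X. fst (snd q) = t k} (x k, t k, s k)" for k
  have wT: "(0, 0, w) \<in> T" if w: "norm w \<le> 1 / 2" for w
  proof -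
    have w1: "norm w \<le> 1" using w by simp
    have "\<forall>e>0. \<exists>z\<in>T. dist z (0, 0, w) < e"
    proof (intro allI impI)
      fix e :: real assume e: "e > 0"
      have E1: "\<forall>\<^sub>F k in sequentially. (\<forall>v\<in>V k. norm v \<le> 1 \<longrightarrow> (\<exists>z\<in>T. norm z \<le> 1 \<and> dist v z < e / 2))"
        using conv[unfolded grassmann_tendsto_def, rule_format, of "e / 2"] e
        unfolding V_def by (auto elim: eventually_mono)
      have E4: "\<forall>\<^sub>F k in sequentially. C * K * \<mu> k powr a < min (e / 2) (1 / 2)"
        using order_tendstoD(2)[OF pwl, of "min (e / 2) (1 / 2)"] e by simp
      have "\<forall>\<^sub>F k in sequentially. (\<forall>v\<in>V k. norm v \<le> 1 \<longrightarrow> (\<exists>z\<in>T. norm z \<le> 1 \<and> dist v z < e / 2)) \<and>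
              C * K * \<mu> k powr a < min (e / 2) (1 / 2) \<and> (x k, t k) \<in> U \<and>
              norm (F (x k, t k)) powr \<theta> \<le> C * nu F (t k) (x k)"
        by (intro eventually_conj E1 E4 EU EL)
      then obtain N where N: "\<And>k. k \<ge> N \<Longrightarrow> (\<forall>v\<in>V k. norm v \<le> 1 \<longrightarrow> (\<exists>z\<in>T. norm z \<le> 1 \<and> dist v z < e / 2)) \<and>
              C * K * \<mu> k powr a < min (e / 2) (1 / 2) \<and> (x k, t k) \<in> U \<and>
              norm (F (x k, t k)) powr \<theta> \<le> C * nu F (t k) (x k)"
        unfolding eventually_sequentially by blast
      note Nk = N[OF order_refl]
      obtain z0 where z0V: "(z0, 0, w) \<in> V N"
        and z0b: "norm z0 \<le> C * (real CARD('m) * real L) * (Max (range (\<lambda>i. \<bar>s N $ i\<bar>))) powr (real L - 1 - real L * \<theta>)"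
        using key_k[OF X seqX[of N] U(1) _ anal seqreg[of N] _ C theta(1) L2 w1] Nk
        unfolding V_def by blast
      have z0s: "norm z0 < min (e / 2) (1 / 2)"
        using z0b Nk unfolding \<mu>_def K_def a_def by linarith
      have "norm (z0, (0::real), w) \<le> norm z0 + norm ((0::real), w)" by (rule norm_Pair_le)
      also have "norm ((0::real), w) = norm w" by (simp add: norm_Pair)
      finally have "norm (z0, (0::real), w) \<le> 1" using z0s w by linarith
      then obtain z where zT: "z \<in> T" and dz: "dist (z0, 0, w) z < e / 2"
        using Nk z0V by blast
      have "dist z (0, 0, w) \<le> dist z (z0, 0, w) + dist (z0, 0::real, w) (0, 0, w)"
        by (rule dist_triangle)
      also have "dist (z0, 0::real, w) (0, 0, w) = norm z0" by (simp add: dist_Pair_Pair)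
      finally have "dist z (0, 0, w) < e" using dz z0s by (simp add: dist_commute)
      thus "\<exists>z\<in>T. dist z (0, 0, w) < e" using zT by blast
    qed
    thus ?thesis using closed_approachable[OF closed_subspace[OF Tgr(1)]] by blast
  qed
  have wTall: "(0, 0, w) \<in> T" for w
  proof (cases "w = 0")
    case True
    have "(0::((real^'n) \<times> real \<times> (real^'m))) \<in> T" by (rule subspace_0[OF Tgr(1)])
    thus ?thesis using True by (simp add: zero_prod_def)
  next
    case False
    define w' where "w' = (1 / (2 * norm w)) *\<^sub>R w"
    have "norm w' \<le> 1 / 2" using False by (simp add: w'_def)
    hence "(0, 0, w') \<in> T" by (rule wT)
    hence "(2 * norm w) *\<^sub>R (0, 0, w') \<in> T" by (rule subspace_scale[OF Tgr(1)])
    moreover have "(2 * norm w) *\<^sub>R (0::real^'n, 0::real, w') = (0, 0, w)"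
      using False by (simp add: w'_def)
    ultimately show ?thesis by simp
  qed
  have mid: "fst (snd v) = 0" if vT: "v \<in> T" for v
  proof (cases "v = 0")
    case True thus ?thesis by (simp add: zero_prod_def)
  next
    case False
    define v' where "v' = (1 / norm v) *\<^sub>R v"
    have nv': "norm v' = 1" using False by (simp add: v'_def)
    have v'T: "v' \<in> T" unfolding v'_def by (rule subspace_scale[OF Tgr(1) vT])
    have "\<bar>fst (snd v')\<bar> < e" if e: "e > 0" for e
    proof -
      have "\<forall>\<^sub>F k in sequentially. (\<forall>w\<in>T. norm w \<le> 1 \<longrightarrow> (\<exists>u\<in>V k. norm u \<le> 1 \<and> dist u w < e))"
        using conv[unfolded grassmann_tendsto_def, rule_format, of e] e
        unfolding V_def by (auto elim: eventually_mono)
      then obtain N where "\<forall>w\<in>T. norm w \<le> 1 \<longrightarrow> (\<exists>u\<in>V N. norm u \<le> 1 \<and> dist u w < e)"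
        unfolding eventually_sequentially by blast
      then obtain u where uV: "u \<in> V N" and du: "dist u v' < e" using v'T nv' by auto
      have u0: "fst (snd u) = 0" using uV unfolding V_def by (rule tangent_mid0)
      have "\<bar>fst (snd v')\<bar> = \<bar>fst (snd (v' - u))\<bar>" using u0 by simp
      also have "\<dots> \<le> norm (snd (v' - u))"
      proof -
        have "norm (fst (snd (v' - u))) \<le> norm (fst (snd (v' - u)), snd (snd (v' - u)))" by (rule norm_fst_le)
        thus ?thesis by (simp only: prod.collapse real_norm_def)
      qed
      also have "\<dots> \<le> norm (v' - u)"
      proof -
        have "norm (snd (v' - u)) \<le> norm (fst (v' - u), snd (v' - u))" by (rule norm_snd_le)
        thus ?thesis by (simp only: prod.collapse)
      qed
      also have "\<dots> < e" using du by (simp add: dist_norm norm_minus_commute)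
      finally show ?thesis .
    qed
    hence "fst (snd v') = 0"
    proof -
      assume H: "\<And>e. e > 0 \<Longrightarrow> \<bar>fst (snd v')\<bar> < e"
      show ?thesis
      proof (rule ccontr)
        assume "fst (snd v') \<noteq> 0"
        hence "\<bar>fst (snd v')\<bar> > 0" by simp
        from H[OF this] show False by simp
      qed
    qed
    hence "fst (snd v) / norm v = 0" by (simp add: v'_def)
    thus ?thesis using False by simp
  qed
  show ?thesis by (rule final_alg[OF Tgr mid wTall])
qed

end
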